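(* In the ef-MCA model of the context with a two-parameter exponential family distribution $p(y;\vec{\eta})$ whose sufficient statistics satisfy $T_1(y)=y$, the condition on $W_{dh}$ (for the derivative of the lower bound $\mathcal{F}(q,\Theta)$ with respect to $W_{dh}$ and $V_{dh}$ to vanish, together with the corresponding condition $V_{dh}=\sum_n\langle\mathcal{A}_{dh}\rangle_{q^{(n)}}T_2(y_d^{(n)})/\sum_n\langle\mathcal{A}_{dh}\rangle_{q^{(n)}}$) is $$W_{dh}=\frac{\sum_{n=1}^N\langle\mathcal{A}_{dh}(\vec{s},\Theta)\rangle_{q^{(n)}}\,y_d^{(n)}}{\sum_{n=1}^N\langle\mathcal{A}_{dh}(\vec{s},\Theta)\rangle_{q^{(n)}}}.$$
   Context: Exponential family: $p(y;\vec{\eta})=h(y)\exp(\vec{\eta}^T\vec{T}(y)-A(\vec{\eta}))$, $\vec{T}(y)=(T_1(y),T_2(y))^T$, finite $A$. Mean value parameters $\vec{w}=\langle\vec{T}(y)\rangle_{p(y;\vec{\eta})}$, assumed invertible with inverse $\vec{\Phi}$. $F(w,v)=\langle y\rangle_{p(y;\vec{\Phi}(w,v))}$, $M_{dh}(\Theta)=F(W_{dh},V_{dh})$ for matrices $W,V\in\mathbb{R}^{D\times H}$ in $\Theta$. For $\vec{s}\in\{0,1\}^H$: $h(d,\vec{s},\Theta)=\mathrm{argmax}_h\{M_{dh}(\Theta)s_h\}$, $\bar{W}_d=W_{d\,h(d,\vec{s},\Theta)}$, $\bar{V}_d=V_{d\,h(d,\vec{s},\Theta)}$, $\vec{\tilde{\eta}}_d(\vec{s},\Theta)=\vec{\Phi}(\bar{W}_d,\bar{V}_d)$.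 Model: $p(\vec{s}\mid\Theta)=\prod_h\pi_h^{s_h}(1-\pi_h)^{1-s_h}$, $p(\vec{y}\mid\vec{s},\Theta)=\prod_d p(y_d;\vec{\tilde{\eta}}_d(\vec{s},\Theta))$. Data $\vec{y}^{(1)},\dots,\vec{y}^{(N)}$, distributions $q^{(n)}$ on $\{0,1\}^H$, lower bound $\mathcal{F}(q,\Theta)=\sum_n\sum_{\vec{s}}q^{(n)}(\vec{s})\{\sum_d\log p(y_d^{(n)};\vec{\tilde{\eta}}_d(\vec{s},\Theta))+\sum_h\log p(s_h\mid\Theta)\}+\mathcal{H}(q)$ with $\mathcal{H}$ the entropy. $\mathcal{A}_{dh}(\vec{s},\Theta)=1$ if $h=h(d,\vec{s},\Theta)$ and $0$ otherwise; $\langle\cdot\rangle_{q^{(n)}}$ is expectation under $q^{(n)}$. *)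

theory Defs
  imports "HOL-Analysis.Analysis" "HOL-Probability.Probability"
begin

definition ef_integrand ::
  "(real \<Rightarrow> real) \<Rightarrow> (real \<Rightarrow> real) \<Rightarrow> (real \<Rightarrow> real) \<Rightarrow> real \<times> real \<Rightarrow> real \<Rightarrow> real" where
  "ef_integrand h T1 T2 eta y = h y * exp (fst eta * T1 y + snd eta * T2 y)"

definition ef_dom ::
  "real measure \<Rightarrow> (real \<Rightarrow> real) \<Rightarrow> (real \<Rightarrow> real) \<Rightarrow> (real \<Rightarrow> real) \<Rightarrow> (real \<times> real) set" where
  "ef_dom mu h T1 T2 = {eta. integrable mu (ef_integrand h T1 T2 eta)
                            \<and> (\<integral>y. ef_integrand h T1 T2 eta y \<partial>mu) > 0}"

definition ef_A ::
  "real measure \<Rightarrow> (real \<Rightarrow> real) \<Rightarrow> (real \<Rightarrow> real) \<Rightarrow> (real \<Rightarrow> real) \<Rightarrow> real \<times> real \<Rightarrow> real" where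
  "ef_A mu h T1 T2 eta = ln (\<integral>y. ef_integrand h T1 T2 eta y \<partial>mu)"

definition ef_p ::
  "real measure \<Rightarrow> (real \<Rightarrow> real) \<Rightarrow> (real \<Rightarrow> real) \<Rightarrow> (real \<Rightarrow> real) \<Rightarrow> real \<times> real \<Rightarrow> real \<Rightarrow> real" where
  "ef_p mu h T1 T2 eta y = h y * exp (fst eta * T1 y + snd eta * T2 y - ef_A mu h T1 T2 eta)"

definition ef_mean ::
  "real measure \<Rightarrow> (real \<Rightarrow> real) \<Rightarrow> (real \<Rightarrow> real) \<Rightarrow> (real \<Rightarrow> real) \<Rightarrow> real \<times> real \<Rightarrow> real \<times> real" where
  "ef_mean mu h T1 T2 eta =
     ((\<integral>y. T1 y * ef_p mu h T1 T2 eta y \<partial>mu), (\<integral>y. T2 y * ef_p mu h T1 T2 eta y \<partial>mu))"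

text \<open>Hidden states s in {0,1}^H are represented as subsets of {..<H} (s_h = 1 iff h in s).
  W, V are D x H matrices (indices d < D, h < H); pri are the prior parameters.\<close>

definition mca_F ::
  "real measure \<Rightarrow> (real \<Rightarrow> real) \<Rightarrow> (real \<Rightarrow> real) \<Rightarrow> (real \<Rightarrow> real)
   \<Rightarrow> (real \<times> real \<Rightarrow> real \<times> real) \<Rightarrow> real \<Rightarrow> real \<Rightarrow> real" where
  "mca_F mu h T1 T2 Phi w v = (\<integral>y. y * ef_p mu h T1 T2 (Phi (w, v)) y \<partial>mu)"

definition mca_M ::
  "real measure \<Rightarrow> (real \<Rightarrow> real) \<Rightarrow> (real \<Rightarrow> real) \<Rightarrow> (real \<Rightarrow> real)
   \<Rightarrow> (real \<times> real \<Rightarrow> real \<times> real) \<Rightarrow> (nat \<Rightarrow> nat \<Rightarrow> real) \<Rightarrow> (nat \<Rightarrow> nat \<Rightarrow> real)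
   \<Rightarrow> nat \<Rightarrow> nat \<Rightarrow> real" where
  "mca_M mu h T1 T2 Phi W V d k = mca_F mu h T1 T2 Phi (W d k) (V d k)"

text \<open>h(d, s, Theta) = argmax_h M_dh s_h (over h < H; ties broken by Hilbert choice).\<close>
definition mca_hsel ::
  "real measure \<Rightarrow> (real \<Rightarrow> real) \<Rightarrow> (real \<Rightarrow> real) \<Rightarrow> (real \<Rightarrow> real)
   \<Rightarrow> (real \<times> real \<Rightarrow> real \<times> real) \<Rightarrow> nat \<Rightarrow> (nat \<Rightarrow> nat \<Rightarrow> real) \<Rightarrow> (nat \<Rightarrow> nat \<Rightarrow> real)
   \<Rightarrow> nat \<Rightarrow> nat set \<Rightarrow> nat" where
  "mca_hsel mu h T1 T2 Phi H W V d s =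
     arg_max_on (\<lambda>k. mca_M mu h T1 T2 Phi W V d k * (if k \<in> s then 1 else 0)) {..<H}"

definition mca_Aind ::
  "real measure \<Rightarrow> (real \<Rightarrow> real) \<Rightarrow> (real \<Rightarrow> real) \<Rightarrow> (real \<Rightarrow> real)
   \<Rightarrow> (real \<times> real \<Rightarrow> real \<times> real) \<Rightarrow> nat \<Rightarrow> (nat \<Rightarrow> nat \<Rightarrow> real) \<Rightarrow> (nat \<Rightarrow> nat \<Rightarrow> real)
   \<Rightarrow> nat \<Rightarrow> nat \<Rightarrow> nat set \<Rightarrow> real" where
  "mca_Aind mu h T1 T2 Phi H W V d k s =
     (if k = mca_hsel mu h T1 T2 Phi H W V d s then 1 else 0)"

definition mca_expA ::
  "real measure \<Rightarrow> (real \<Rightarrow> real) \<Rightarrow> (real \<Rightarrow> real) \<Rightarrow> (real \<Rightarrow> real)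
   \<Rightarrow> (real \<times> real \<Rightarrow> real \<times> real) \<Rightarrow> nat \<Rightarrow> (nat \<Rightarrow> nat set \<Rightarrow> real)
   \<Rightarrow> (nat \<Rightarrow> nat \<Rightarrow> real) \<Rightarrow> (nat \<Rightarrow> nat \<Rightarrow> real) \<Rightarrow> nat \<Rightarrow> nat \<Rightarrow> nat \<Rightarrow> real" where
  "mca_expA mu h T1 T2 Phi H q W V n d k =
     (\<Sum>s\<in>Pow {..<H}. q n s * mca_Aind mu h T1 T2 Phi H W V d k s)"

definition mca_log_prior :: "nat \<Rightarrow> (nat \<Rightarrow> real) \<Rightarrow> nat set \<Rightarrow> real" where
  "mca_log_prior H pri s = (\<Sum>k<H. if k \<in> s then ln (pri k) else ln (1 - pri k))"

definition mca_entropy :: "nat \<Rightarrow> nat \<Rightarrow> (nat \<Rightarrow> nat set \<Rightarrow> real) \<Rightarrow> real" where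
  "mca_entropy N H q = - (\<Sum>n<N. \<Sum>s\<in>Pow {..<H}. q n s * ln (q n s))"

text \<open>Lower bound F(q, Theta) in which the assignment h(d,s,.) (i.e. A_dh) is evaluated at the
  reference parameters (W0, V0) while the likelihood terms use (W, V).  Derivatives are taken with A_dh held fixed at
  the current Theta, as in the paper's derivation of the M-step.\<close>
definition mca_lower_bound_frozen ::
  "real measure \<Rightarrow> (real \<Rightarrow> real) \<Rightarrow> (real \<Rightarrow> real) \<Rightarrow> (real \<Rightarrow> real)
   \<Rightarrow> (real \<times> real \<Rightarrow> real \<times> real) \<Rightarrow> nat \<Rightarrow> nat \<Rightarrow> nat
   \<Rightarrow> (nat \<Rightarrow> nat \<Rightarrow> real) \<Rightarrow> (nat \<Rightarrow> nat set \<Rightarrow> real)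
   \<Rightarrow> (nat \<Rightarrow> nat \<Rightarrow> real) \<Rightarrow> (nat \<Rightarrow> nat \<Rightarrow> real)
   \<Rightarrow> (nat \<Rightarrow> nat \<Rightarrow> real) \<Rightarrow> (nat \<Rightarrow> nat \<Rightarrow> real) \<Rightarrow> (nat \<Rightarrow> real) \<Rightarrow> real" where
  "mca_lower_bound_frozen mu h T1 T2 Phi D H N y q W0 V0 W V pri =
     (\<Sum>n<N. \<Sum>s\<in>Pow {..<H}. q n s *
        ((\<Sum>d<D. ln (ef_p mu h T1 T2
              (Phi (W d (mca_hsel mu h T1 T2 Phi H W0 V0 d s),
                    V d (mca_hsel mu h T1 T2 Phi H W0 V0 d s))) (y n d)))
         + mca_log_prior H pri s))
     + mca_entropy N H q"

definition mca_lower_bound ::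
  "real measure \<Rightarrow> (real \<Rightarrow> real) \<Rightarrow> (real \<Rightarrow> real) \<Rightarrow> (real \<Rightarrow> real)
   \<Rightarrow> (real \<times> real \<Rightarrow> real \<times> real) \<Rightarrow> nat \<Rightarrow> nat \<Rightarrow> nat
   \<Rightarrow> (nat \<Rightarrow> nat \<Rightarrow> real) \<Rightarrow> (nat \<Rightarrow> nat set \<Rightarrow> real)
   \<Rightarrow> (nat \<Rightarrow> nat \<Rightarrow> real) \<Rightarrow> (nat \<Rightarrow> nat \<Rightarrow> real) \<Rightarrow> (nat \<Rightarrow> real) \<Rightarrow> real" where
  "mca_lower_bound mu h T1 T2 Phi D H N y q W V pri =
     mca_lower_bound_frozen mu h T1 T2 Phi D H N y q W V W V pri"

end

theory Submission
  imports Defs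
begin


locale efs =
  fixes mu :: "real measure" and h T1 T2 :: "real \<Rightarrow> real"
  assumes h_meas: "h \<in> borel_measurable borel" and h_nonneg: "\<And>y. h y \<ge> 0"
    and T1_meas: "T1 \<in> borel_measurable borel" and T2_meas: "T2 \<in> borel_measurable borel"
    and space_mu: "sets mu = sets borel"
    and dom_open: "open (ef_dom mu h T1 T2)"
begin

abbreviation "e \<equiv> ef_integrand h T1 T2"
abbreviation "B \<equiv> \<lambda>y. \<bar>T1 y\<bar> + \<bar>T2 y\<bar>"
definition "F g eta = (\<integral>y. g y * e eta y \<partial>mu)"

lemma meas_mu: assumes "f \<in> borel_measurable borel" shows "f \<in> borel_measurable mu"
  using assms measurable_cong_sets[OF space_mu refl, of borel] by blast

lemma e_meas[measurable]: "e eta \<in> borel_measurable mu"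
  unfolding ef_integrand_def by (intro meas_mu) (use h_meas T1_meas T2_meas in measurable)

lemma h_meas_mu[measurable]: "h \<in> borel_measurable mu" by (rule meas_mu[OF h_meas])
lemma T1_meas_mu[measurable]: "T1 \<in> borel_measurable mu" by (rule meas_mu[OF T1_meas])
lemma T2_meas_mu[measurable]: "T2 \<in> borel_measurable mu" by (rule meas_mu[OF T2_meas])

lemma e_nonneg: "e eta y \<ge> 0" unfolding ef_integrand_def using h_nonneg by simp

lemma e_shift: "e (eta + v) y = e eta y * exp (fst v * T1 y + snd v * T2 y)"
  unfolding ef_integrand_def by (simp add: algebra_simps flip: exp_add)

lemma norm_pair_le: "norm (a::real, b::real) \<le> \<bar>a\<bar> + \<bar>b\<bar>"
  using norm_Pair_le[of a b] by simp

lemma corner: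
  assumes "eta \<in> ef_dom mu h T1 T2"
  shows "\<exists>\<delta>>0. integrable mu (\<lambda>y. exp (\<delta> * B y) * e eta y)"
proof -
  obtain r where r: "r > 0" "ball eta r \<subseteq> ef_dom mu h T1 T2"
    using dom_open assms open_contains_ball by blast
  define \<delta> where "\<delta> = r / 3"
  have dp: "\<delta> > 0" using r by (simp add: \<delta>_def)
  have int: "integrable mu (e (eta + (\<delta> * s1, \<delta> * s2)))" if "s1 \<in> {-1,1}" "s2 \<in> {-1,1}" for s1 s2
  proof -
    have "dist eta (eta + (\<delta> * s1, \<delta> * s2)) \<le> \<bar>\<delta> * s1\<bar> + \<bar>\<delta> * s2\<bar>"
      using norm_pair_le[of "-(\<delta> * s1)" "-(\<delta> * s2)"] by (simp add: dist_norm)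
    also have "\<dots> < r" using that dp by (auto simp: \<delta>_def abs_mult)
    finally have "eta + (\<delta> * s1, \<delta> * s2) \<in> ef_dom mu h T1 T2" using r by auto
    then show ?thesis by (simp add: ef_dom_def)
  qed
  let ?S = "\<lambda>y. e (eta + (\<delta>, \<delta>)) y + e (eta + (\<delta>, -\<delta>)) y + e (eta + (-\<delta>, \<delta>)) y + e (eta + (-\<delta>, -\<delta>)) y"
  have intS: "integrable mu ?S"
    using int[of 1 1] int[of 1 "-1"] int[of "-1" 1] int[of "-1" "-1"] by simp
  have "integrable mu (\<lambda>y. exp (\<delta> * B y) * e eta y)"
  proof (rule Bochner_Integration.integrable_bound[OF intS])
    show "AE y in mu. norm (exp (\<delta> * B y) * e eta y) \<le> norm (?S y)"
    proof (intro AE_I2)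
      fix y
      have nn: "0 \<le> e (eta + (a, b)) y" for a b using e_nonneg by simp
      define s1 where "s1 = (if T1 y \<ge> 0 then 1 else -1::real)"
      define s2 where "s2 = (if T2 y \<ge> 0 then 1 else -1::real)"
      have a1: "\<bar>T1 y\<bar> = s1 * T1 y" by (simp add: s1_def)
      have a2: "\<bar>T2 y\<bar> = s2 * T2 y" by (simp add: s2_def)
      have key: "exp (\<delta> * B y) * e eta y = e (eta + (\<delta> * s1, \<delta> * s2)) y"
        unfolding e_shift a1 a2 by (simp add: algebra_simps)
      have "e (eta + (\<delta> * s1, \<delta> * s2)) y \<le> ?S y"
        using nn[of \<delta> \<delta>] nn[of \<delta> "-\<delta>"] nn[of "-\<delta>" \<delta>] nn[of "-\<delta>" "-\<delta>"]
        by (cases "T1 y \<ge> 0"; cases "T2 y \<ge> 0"; simp add: s1_def s2_def; linarith?)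
      then have "exp (\<delta> * B y) * e eta y \<le> ?S y" unfolding key .
      then show "norm (exp (\<delta> * B y) * e eta y) \<le> norm (?S y)"
        using e_nonneg[of eta y] nn by simp
    qed
  qed measurable
  then show ?thesis using dp by blast
qed

lemma int_bound:
  assumes "integrable mu (\<lambda>y. exp (\<delta> * B y) * e eta y)" "f \<in> borel_measurable mu"
    "\<And>y. \<bar>f y\<bar> \<le> C * exp (\<delta> * B y)"
  shows "integrable mu (\<lambda>y. f y * e eta y)"
proof (rule Bochner_Integration.integrable_bound)
  show "integrable mu (\<lambda>y. C * (exp (\<delta> * B y) * e eta y))" using assms(1) by simp
  show "AE y in mu. norm (f y * e eta y) \<le> norm (C * (exp (\<delta> * B y) * e eta y))"
  proof (intro AE_I2)
    fix y
    have "\<bar>f y\<bar> * e eta y \<le> C * exp (\<delta> * B y) * e eta y"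
      using assms(3)[of y] e_nonneg[of eta y] by (rule mult_right_mono)
    moreover have "C * (exp (\<delta> * B y) * e eta y) \<le> \<bar>C\<bar> * (exp (\<delta> * B y) * e eta y)"
      by (rule mult_right_mono) (auto simp: e_nonneg)
    moreover have "norm (f y * e eta y) = \<bar>f y\<bar> * e eta y" using e_nonneg[of eta y] by (simp add: abs_mult)
    moreover have "norm (C * (exp (\<delta> * B y) * e eta y)) = \<bar>C\<bar> * (exp (\<delta> * B y) * e eta y)"
      using e_nonneg[of eta y] by (simp add: abs_mult)
    ultimately show "norm (f y * e eta y) \<le> norm (C * (exp (\<delta> * B y) * e eta y))"
      by (simp only: mult.assoc)
  qed
qed (use assms(2) in measurable)

lemma B_nonneg: "B y \<ge> 0" by simp

lemma one_B_bound:
  assumes "0 < d" shows "1 + B y \<le> (1 + 1/d) * exp (d * B y)"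
proof -
  have a: "d * B y \<le> exp (d * B y)" using exp_ge_add_one_self[of "d * B y"] by linarith
  have "B y \<le> exp (d * B y) / d" using a assms by (simp add: field_simps)
  moreover have "1 \<le> exp (d * B y)" using assms B_nonneg[of y] by simp
  moreover have "(1 + 1/d) * exp (d * B y) = exp (d * B y) + exp (d * B y) / d"
    using assms by (simp add: field_simps)
  ultimately show ?thesis by linarith
qed

lemma pow_B_bound:
  assumes "0 < d" shows "(1 + B y) ^ k \<le> (1 + 1/d) ^ k * exp (real k * d * B y)"
proof -
  have "(1 + B y) ^ k \<le> ((1 + 1/d) * exp (d * B y)) ^ k"
    by (rule power_mono[OF one_B_bound[OF assms]]) (simp add: add_nonneg_nonneg)
  also have "\<dots> = (1 + 1/d) ^ k * exp (real k * d * B y)"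
    by (simp add: power_mult_distrib flip: exp_of_nat_mult)
  finally show ?thesis .
qed

lemma exp_rem: "\<bar>exp (x::real) - 1 - x\<bar> \<le> x\<^sup>2 * exp \<bar>x\<bar>"
proof -
  obtain t where t: "\<bar>t\<bar> \<le> \<bar>x\<bar>" "exp x = (\<Sum>m<2. x ^ m / fact m) + exp t / fact 2 * x ^ 2"
    using Maclaurin_exp_le[of x 2] by blast
  have eq: "exp x - 1 - x = exp t / 2 * x ^ 2" using t(2) by (simp add: numeral_2_eq_2)
  have "exp t \<le> exp \<bar>x\<bar>" using t(1) by simp
  have nn: "exp t / 2 * x ^ 2 \<ge> 0" by simp
  have "\<bar>exp x - 1 - x\<bar> = exp t / 2 * x ^ 2" unfolding eq using nn by (rule abs_of_nonneg)
  also have "\<dots> \<le> exp \<bar>x\<bar> * x ^ 2"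
  proof (rule mult_right_mono)
    show "exp t / 2 \<le> exp \<bar>x\<bar>" using \<open>exp t \<le> exp \<bar>x\<bar>\<close> exp_gt_zero[of "\<bar>x\<bar>"] by linarith
  qed simp
  finally show ?thesis by (simp add: mult.commute)
qed

lemma abs_fst_le: "\<bar>fst (v::real\<times>real)\<bar> \<le> norm v"
  by (metis norm_fst_le prod.collapse real_norm_def)
lemma abs_snd_le: "\<bar>snd (v::real\<times>real)\<bar> \<le> norm v"
  by (metis norm_snd_le prod.collapse real_norm_def)

lemma lin_bound: "\<bar>fst v * T1 y + snd v * T2 y\<bar> \<le> norm v * B y"
proof -
  have "\<bar>fst v * T1 y + snd v * T2 y\<bar> \<le> \<bar>fst v\<bar> * \<bar>T1 y\<bar> + \<bar>snd v\<bar> * \<bar>T2 y\<bar>"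
    by (metis abs_mult abs_triangle_ineq)
  also have "\<dots> \<le> norm v * \<bar>T1 y\<bar> + norm v * \<bar>T2 y\<bar>"
    by (intro add_mono mult_right_mono abs_fst_le abs_snd_le) auto
  finally show ?thesis by (simp add: distrib_left)
qed

lemma F_deriv:
  assumes eta: "eta \<in> ef_dom mu h T1 T2" and g[measurable]: "g \<in> borel_measurable mu"
    and gb: "\<And>y. \<bar>g y\<bar> \<le> 1 + B y"
  shows "(F g has_derivative (\<lambda>u. fst u * F (\<lambda>y. g y * T1 y) eta + snd u * F (\<lambda>y. g y * T2 y) eta)) (at eta)"
proof -
  obtain \<delta> where \<delta>: "\<delta> > 0" and I: "integrable mu (\<lambda>y. exp (\<delta> * B y) * e eta y)"
    using corner[OF eta] by blast
  define d where "d = \<delta> / 4"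
  have d: "d > 0" using \<delta> by (simp add: d_def)
  have gen: "(1 + B y) ^ k * exp (real j * d * B y) \<le> (1 + 1/d) ^ k * exp (\<delta> * B y)"
    if "k + j \<le> 4" for k j y
  proof -
    have "(1 + B y) ^ k * exp (real j * d * B y) \<le> ((1 + 1/d) ^ k * exp (real k * d * B y)) * exp (real j * d * B y)"
      by (rule mult_right_mono[OF pow_B_bound[OF d]]) simp
    also have "\<dots> = (1 + 1/d) ^ k * exp (real (k + j) * d * B y)"
      by (simp add: algebra_simps flip: exp_add)
    also have "\<dots> \<le> (1 + 1/d) ^ k * exp (\<delta> * B y)"
    proof -
      have "real (k + j) * d \<le> \<delta>" using that d by (simp add: d_def)
      then have "real (k + j) * d * B y \<le> \<delta> * B y" by (rule mult_right_mono) simp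
      moreover have "0 \<le> (1 + 1/d) ^ k" using d by simp
      ultimately show ?thesis by (intro mult_left_mono) auto
    qed
    finally show ?thesis .
  qed
  let ?D = "\<lambda>u. fst u * F (\<lambda>y. g y * T1 y) eta + snd u * F (\<lambda>y. g y * T2 y) eta"
  let ?x = "\<lambda>v y. fst v * T1 y + snd v * T2 y"
  have iT1: "integrable mu (\<lambda>y. (g y * T1 y) * e eta y)"
  proof (rule int_bound[OF I])
    fix y
    have "\<bar>g y * T1 y\<bar> \<le> (1 + B y) * (1 + B y)"
      unfolding abs_mult by (intro mult_mono gb) auto
    also have "\<dots> = (1 + B y) ^ 2 * exp (real 0 * d * B y)" by (simp add: power2_eq_square)
    also have "\<dots> \<le> (1 + 1/d) ^ 2 * exp (\<delta> * B y)" by (rule gen) simp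
    finally show "\<bar>g y * T1 y\<bar> \<le> (1 + 1/d) ^ 2 * exp (\<delta> * B y)" .
  qed measurable
  have iT2: "integrable mu (\<lambda>y. (g y * T2 y) * e eta y)"
  proof (rule int_bound[OF I])
    fix y
    have "\<bar>g y * T2 y\<bar> \<le> (1 + B y) * (1 + B y)"
      unfolding abs_mult by (intro mult_mono gb) auto
    also have "\<dots> = (1 + B y) ^ 2 * exp (real 0 * d * B y)" by (simp add: power2_eq_square)
    also have "\<dots> \<le> (1 + 1/d) ^ 2 * exp (\<delta> * B y)" by (rule gen) simp
    finally show "\<bar>g y * T2 y\<bar> \<le> (1 + 1/d) ^ 2 * exp (\<delta> * B y)" .
  qed measurable
  have ig: "integrable mu (\<lambda>y. g y * e eta y)"
  proof (rule int_bound[OF I])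
    fix y
    have "\<bar>g y\<bar> \<le> (1 + B y) ^ 1 * exp (real 0 * d * B y)" using gb by simp
    also have "\<dots> \<le> (1 + 1/d) ^ 1 * exp (\<delta> * B y)" by (rule gen) simp
    finally show "\<bar>g y\<bar> \<le> (1 + 1/d) ^ 1 * exp (\<delta> * B y)" .
  qed measurable
  have iv: "integrable mu (\<lambda>y. (g y * exp (?x v y)) * e eta y)" if v: "norm v \<le> d" for v
  proof (rule int_bound[OF I])
    fix y
    have "?x v y \<le> d * B y"
      using lin_bound[of v y] mult_right_mono[OF v B_nonneg[of y]] by linarith
    then have "\<bar>g y * exp (?x v y)\<bar> \<le> (1 + B y) ^ 1 * exp (real 1 * d * B y)"
      unfolding abs_mult using gb[of y] by (intro mult_mono) auto
    also have "\<dots> \<le> (1 + 1/d) ^ 1 * exp (\<delta> * B y)" by (rule gen) simp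
    finally show "\<bar>g y * exp (?x v y)\<bar> \<le> (1 + 1/d) ^ 1 * exp (\<delta> * B y)" .
  qed measurable
  define Kf where "Kf = (\<lambda>y. ((1 + B y) ^ 3 * exp (real 1 * d * B y)) * e eta y)"
  have iK: "integrable mu Kf"
    unfolding Kf_def
  proof (rule int_bound[OF I])
    fix y
    have "\<bar>(1 + B y) ^ 3 * exp (real 1 * d * B y)\<bar> = (1 + B y) ^ 3 * exp (real 1 * d * B y)"
      by (intro abs_of_nonneg mult_nonneg_nonneg) auto
    also have "\<dots> \<le> (1 + 1/d) ^ 3 * exp (\<delta> * B y)" by (rule gen) simp
    finally show "\<bar>(1 + B y) ^ 3 * exp (real 1 * d * B y)\<bar> \<le> (1 + 1/d) ^ 3 * exp (\<delta> * B y)" .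
  qed measurable
  define R where "R = (\<lambda>v y. (g y * e eta y) * (exp (?x v y) - 1 - ?x v y))"
  have Rb: "\<bar>R v y\<bar> \<le> (norm v)\<^sup>2 * Kf y" if v: "norm v \<le> d" for v y
  proof -
    let ?r = "exp (?x v y) - 1 - ?x v y"
    have x1: "\<bar>?x v y\<bar> \<le> norm v * B y" by (rule lin_bound)
    have x2: "\<bar>?x v y\<bar> \<le> d * B y"
      using x1 mult_right_mono[OF v B_nonneg[of y]] by linarith
    have r: "\<bar>?r\<bar> \<le> (?x v y)\<^sup>2 * exp \<bar>?x v y\<bar>" by (rule exp_rem)
    have "(?x v y)\<^sup>2 = \<bar>?x v y\<bar>\<^sup>2" by simp
    also have "\<dots> \<le> (norm v * (1 + B y))\<^sup>2"
    proof (rule power_mono)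
      show "\<bar>?x v y\<bar> \<le> norm v * (1 + B y)"
        using x1 mult_left_mono[of "B y" "1 + B y" "norm v"] by simp
    qed simp
    finally have xx: "(?x v y)\<^sup>2 \<le> (norm v)\<^sup>2 * (1 + B y)\<^sup>2" by (simp add: power_mult_distrib)
    have ex: "exp \<bar>?x v y\<bar> \<le> exp (real 1 * d * B y)" using x2 by simp
    have "\<bar>?r\<bar> \<le> ((norm v)\<^sup>2 * (1 + B y)\<^sup>2) * exp (real 1 * d * B y)"
    proof -
      have "(?x v y)\<^sup>2 * exp \<bar>?x v y\<bar> \<le> ((norm v)\<^sup>2 * (1 + B y)\<^sup>2) * exp (real 1 * d * B y)"
        by (rule mult_mono[OF xx ex]) simp_all
      then show ?thesis using r by linarith
    qed
    then have "\<bar>g y\<bar> * \<bar>?r\<bar> \<le> (1 + B y) * (((norm v)\<^sup>2 * (1 + B y)\<^sup>2) * exp (real 1 * d * B y))"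
      using gb[of y] by (intro mult_mono) auto
    then have "(\<bar>g y\<bar> * \<bar>?r\<bar>) * e eta y \<le> ((1 + B y) * (((norm v)\<^sup>2 * (1 + B y)\<^sup>2) * exp (real 1 * d * B y))) * e eta y"
      using e_nonneg by (rule mult_right_mono)
    moreover have "\<bar>R v y\<bar> = (\<bar>g y\<bar> * \<bar>?r\<bar>) * e eta y"
      unfolding R_def using e_nonneg[of eta y] by (simp add: abs_mult)
    moreover have "((1 + B y) * (((norm v)\<^sup>2 * (1 + B y)\<^sup>2) * exp (real 1 * d * B y))) * e eta y = (norm v)\<^sup>2 * Kf y"
      unfolding Kf_def power3_eq_cube power2_eq_square by (simp only: of_nat_1 mult_1 mult_ac)
    ultimately show ?thesis by linarith
  qed
  have Rpt: "R v y = (g y * exp (?x v y)) * e eta y - g y * e eta y - (fst v * ((g y * T1 y) * e eta y) + snd v * ((g y * T2 y) * e eta y))" for v y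
    unfolding R_def by (simp add: algebra_simps)
  have Rfun: "R v = (\<lambda>y. (g y * exp (?x v y)) * e eta y - g y * e eta y - (fst v * ((g y * T1 y) * e eta y) + snd v * ((g y * T2 y) * e eta y)))" for v
    using Rpt by blast
  have iR: "integrable mu (R v)" if v: "norm v \<le> d" for v
    unfolding Rfun by (intro Bochner_Integration.integrable_diff Bochner_Integration.integrable_add integrable_mult_right iv[OF v] ig iT1 iT2)
  have Req: "F g (eta + v) - F g eta - ?D v = (\<integral>y. R v y \<partial>mu)" if v: "norm v \<le> d" for v
  proof -
    have Fv: "F g (eta + v) = (\<integral>y. (g y * exp (?x v y)) * e eta y \<partial>mu)"
      unfolding F_def e_shift by (simp add: ac_simps)
    show ?thesis
      unfolding Rfun Fv
      by (subst Bochner_Integration.integral_diff Bochner_Integration.integral_add integral_mult_right;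
          (intro Bochner_Integration.integrable_diff Bochner_Integration.integrable_add integrable_mult_right iv[OF v] ig iT1 iT2)?)+
         (simp add: F_def)
  qed
  have Rint: "norm (\<integral>y. R v y \<partial>mu) \<le> (norm v)\<^sup>2 * (\<integral>y. Kf y \<partial>mu)" if v: "norm v \<le> d" for v
  proof -
    have "norm (\<integral>y. R v y \<partial>mu) \<le> (\<integral>y. norm (R v y) \<partial>mu)" by (rule integral_norm_bound)
    also have "\<dots> \<le> (\<integral>y. (norm v)\<^sup>2 * Kf y \<partial>mu)"
      using Rb[OF v] by (intro integral_mono integrable_norm iR[OF v] integrable_mult_right iK) auto
    also have "\<dots> = (norm v)\<^sup>2 * (\<integral>y. Kf y \<partial>mu)" by simp
    finally show ?thesis .
  qed
  have bl: "bounded_linear ?D"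
    by (intro bounded_linear_add bounded_linear_compose[OF bounded_linear_mult_left bounded_linear_fst]
        bounded_linear_compose[OF bounded_linear_mult_left bounded_linear_snd])
  show ?thesis
    unfolding has_derivative_at
  proof (intro conjI bl)
    show "(\<lambda>v. norm (F g (eta + v) - F g eta - ?D v) / norm v) \<midarrow>0\<rightarrow> 0"
    proof (rule Lim_null_comparison)
      show "\<forall>\<^sub>F v in at 0. norm (norm (F g (eta + v) - F g eta - ?D v) / norm v) \<le> norm v * (\<integral>y. Kf y \<partial>mu)"
        unfolding eventually_at
      proof (intro exI[of _ d] conjI allI impI ballI d)
        fix v :: "real \<times> real" assume "v \<noteq> 0 \<and> dist v 0 < d"
        then have v0: "v \<noteq> 0" and v: "norm v \<le> d" by auto
        have "norm (norm (F g (eta + v) - F g eta - ?D v) / norm v) = norm (\<integral>y. R v y \<partial>mu) / norm v"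
          using Req[OF v] by simp
        also have "\<dots> \<le> (norm v)\<^sup>2 * (\<integral>y. Kf y \<partial>mu) / norm v"
          using Rint[OF v] by (intro divide_right_mono) auto
        also have "\<dots> = norm v * (\<integral>y. Kf y \<partial>mu)" using v0 by (simp add: power2_eq_square)
        finally show "norm (norm (F g (eta + v) - F g eta - ?D v) / norm v) \<le> norm v * (\<integral>y. Kf y \<partial>mu)" .
      qed
      show "((\<lambda>v. norm v * (\<integral>y. Kf y \<partial>mu)) \<longlongrightarrow> 0) (at (0::real\<times>real))"
        by (intro tendsto_mult_left_zero tendsto_norm_zero tendsto_ident_at)
    qed
  qed
qed

end


context efs begin

abbreviation "EDom \<equiv> ef_dom mu h T1 T2"

lemma int_poly:
  assumes eta: "eta \<in> EDom" and g[measurable]: "g \<in> borel_measurable mu"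
    and gb: "\<And>y. \<bar>g y\<bar> \<le> C * (1 + B y)^2"
  shows "integrable mu (\<lambda>y. g y * e eta y)"
proof -
  obtain \<delta> where \<delta>: "\<delta> > 0" and I: "integrable mu (\<lambda>y. exp (\<delta> * B y) * e eta y)"
    using corner[OF eta] by blast
  have C: "C \<ge> 0"
  proof -
    have "0 \<le> C * (1 + B 0)^2" using gb[of 0] by linarith
    moreover have "(1 + B 0)^2 > 0" by (simp add: add_pos_nonneg)
    ultimately show ?thesis by (simp add: zero_le_mult_iff)
  qed
  show ?thesis
  proof (rule int_bound[OF I g])
    fix y
    have d: "\<delta>/2 > 0" using \<delta> by simp
    have "(1 + B y)^2 \<le> (1 + 1/(\<delta>/2))^2 * exp (real 2 * (\<delta>/2) * B y)"
      by (rule pow_B_bound[OF d])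
    also have "real 2 * (\<delta>/2) * B y = \<delta> * B y" by simp
    finally have "C * (1 + B y)^2 \<le> C * ((1 + 1/(\<delta>/2))^2 * exp (\<delta> * B y))"
      using C by (rule mult_left_mono)
    then show "\<bar>g y\<bar> \<le> (C * (1 + 1/(\<delta>/2))^2) * exp (\<delta> * B y)"
      using gb[of y] by (simp add: mult.assoc)
  qed
qed

definition "Z eta = F (\<lambda>_. 1) eta"

lemma Z_eq: "Z eta = (\<integral>y. e eta y \<partial>mu)" by (simp add: Z_def F_def)

lemma Z_pos: "eta \<in> EDom \<Longrightarrow> Z eta > 0"
  by (simp add: Z_eq ef_dom_def)

lemma p_eq: "eta \<in> EDom \<Longrightarrow> ef_p mu h T1 T2 eta y = e eta y / Z eta"
  using Z_pos[of eta]
  by (simp add: ef_p_def ef_A_def Z_eq ef_integrand_def exp_diff)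

lemma mean_eq: "eta \<in> EDom \<Longrightarrow> ef_mean mu h T1 T2 eta = (F T1 eta / Z eta, F T2 eta / Z eta)"
  by (simp add: ef_mean_def p_eq F_def)

definition "Dm eta u =
   ((   (fst u * F (\<lambda>y. T1 y * T1 y) eta + snd u * F (\<lambda>y. T1 y * T2 y) eta) * Z eta
      - F T1 eta * (fst u * F T1 eta + snd u * F T2 eta)) / (Z eta * Z eta),
    (   (fst u * F (\<lambda>y. T2 y * T1 y) eta + snd u * F (\<lambda>y. T2 y * T2 y) eta) * Z eta
      - F T2 eta * (fst u * F T1 eta + snd u * F T2 eta)) / (Z eta * Z eta))"

lemma Z_deriv: "eta \<in> EDom \<Longrightarrow> (Z has_derivative (\<lambda>u. fst u * F T1 eta + snd u * F T2 eta)) (at eta)"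
  using F_deriv[of eta "\<lambda>_. 1"] by (simp add: Z_def[abs_def] add_nonneg_nonneg)

lemma T1_deriv: "eta \<in> EDom \<Longrightarrow> (F T1 has_derivative (\<lambda>u. fst u * F (\<lambda>y. T1 y * T1 y) eta + snd u * F (\<lambda>y. T1 y * T2 y) eta)) (at eta)"
  using F_deriv[of eta T1] by simp

lemma T2_deriv: "eta \<in> EDom \<Longrightarrow> (F T2 has_derivative (\<lambda>u. fst u * F (\<lambda>y. T2 y * T1 y) eta + snd u * F (\<lambda>y. T2 y * T2 y) eta)) (at eta)"
  using F_deriv[of eta T2] by simp

lemma mean_deriv:
  assumes eta: "eta \<in> EDom"
  shows "(ef_mean mu h T1 T2 has_derivative Dm eta) (at eta)"
proof -
  have Z0: "Z eta \<noteq> 0" using Z_pos[OF eta] by simp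
  have "((\<lambda>x. (F T1 x / Z x, F T2 x / Z x)) has_derivative Dm eta) (at eta)"
    unfolding Dm_def
    by (intro has_derivative_Pair has_derivative_divide' T1_deriv T2_deriv Z_deriv eta Z0)
  then show ?thesis
    by (rule has_derivative_transform_within_open[OF _ dom_open eta]) (simp add: mean_eq)
qed

lemma mean_cont: "continuous_on EDom (ef_mean mu h T1 T2)"
  by (rule has_derivative_continuous_on) (auto intro: has_derivative_at_withinI mean_deriv)

end


context efs begin

lemma Dm_zero:
  assumes inj: "inj_on (ef_mean mu h T1 T2) EDom" and eta: "eta \<in> EDom" and c0: "Dm eta c = 0"
  shows "c = 0"
proof -
  obtain c1 c2 where c: "c = (c1, c2)" by (cases c)
  define Zv where "Zv = Z eta"
  define M1 where "M1 = F T1 eta"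
  define M2 where "M2 = F T2 eta"
  define Q11 where "Q11 = F (\<lambda>y. T1 y * T1 y) eta"
  define Q12 where "Q12 = F (\<lambda>y. T1 y * T2 y) eta"
  define Q21 where "Q21 = F (\<lambda>y. T2 y * T1 y) eta"
  define Q22 where "Q22 = F (\<lambda>y. T2 y * T2 y) eta"
  define DZ where "DZ = c1 * M1 + c2 * M2"
  define m where "m = DZ / Zv"
  have Zp: "Zv > 0" using Z_pos[OF eta] by (simp add: Zv_def)
  have eqs: "(c1 * Q11 + c2 * Q12) * Zv - M1 * DZ = 0" "(c1 * Q21 + c2 * Q22) * Zv - M2 * DZ = 0"
    using c0 Zp unfolding c Dm_def zero_prod_def
    by (simp_all add: Zv_def M1_def M2_def Q11_def Q12_def Q21_def Q22_def DZ_def)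
  have eq1: "c1 * Q11 + c2 * Q12 = M1 * m" using eqs(1) Zp by (simp add: m_def field_simps)
  have eq2: "c1 * Q21 + c2 * Q22 = M2 * m" using eqs(2) Zp by (simp add: m_def field_simps)
  have mZ: "m * Zv = DZ" using Zp by (simp add: m_def)
  have bnd: "1 + B y \<le> (1 + B y)^2" for y
  proof -
    have "1 \<le> 1 + B y" by simp
    then have "(1 + B y) * 1 \<le> (1 + B y) * (1 + B y)" by (intro mult_left_mono) auto
    then show ?thesis by (simp add: power2_eq_square)
  qed
  have bT1: "\<bar>T1 y\<bar> \<le> 1 * (1 + B y)^2" for y using bnd[of y] by simp
  have bT2: "\<bar>T2 y\<bar> \<le> 1 * (1 + B y)^2" for y using bnd[of y] by simp
  have b1: "\<bar>1::real\<bar> \<le> 1 * (1 + B y)^2" for y using bnd[of y] by simp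
  have bTT: "\<bar>Ta y * Tb y\<bar> \<le> 1 * (1 + B y)^2" if "\<bar>Ta y\<bar> \<le> 1 + B y" "\<bar>Tb y\<bar> \<le> 1 + B y" for Ta Tb :: "real \<Rightarrow> real" and y
    using that unfolding abs_mult power2_eq_square by (simp add: mult_mono)
  have hb: "\<And>g. g \<in> borel_measurable mu \<Longrightarrow> (\<And>y. \<bar>g y\<bar> \<le> 1 * (1 + B y)^2) \<Longrightarrow>
      has_bochner_integral mu (\<lambda>y. g y * e eta y) (F g eta)"
    unfolding F_def by (intro has_bochner_integral_integrable int_poly[OF eta, where C=1]) auto
  have h11: "has_bochner_integral mu (\<lambda>y. T1 y * T1 y * e eta y) Q11"
    unfolding Q11_def by (rule hb, measurable, rule bTT) auto
  have h12: "has_bochner_integral mu (\<lambda>y. T1 y * T2 y * e eta y) Q12"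
    unfolding Q12_def by (rule hb, measurable, rule bTT) auto
  have h21: "has_bochner_integral mu (\<lambda>y. T2 y * T1 y * e eta y) Q21"
    unfolding Q21_def by (rule hb, measurable, rule bTT) auto
  have h22: "has_bochner_integral mu (\<lambda>y. T2 y * T2 y * e eta y) Q22"
    unfolding Q22_def by (rule hb, measurable, rule bTT) auto
  have h1: "has_bochner_integral mu (\<lambda>y. T1 y * e eta y) M1"
    unfolding M1_def by (rule hb, measurable, rule bT1)
  have h2: "has_bochner_integral mu (\<lambda>y. T2 y * e eta y) M2"
    unfolding M2_def by (rule hb, measurable, rule bT2)
  have h0: "has_bochner_integral mu (\<lambda>y. 1 * e eta y) Zv"
    unfolding Zv_def Z_def using hb[of "\<lambda>_. 1"] b1 by simp
  define f where "f = (\<lambda>y. c1 * T1 y + c2 * T2 y)"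
  have HB: "has_bochner_integral mu
     (\<lambda>y. c1 * (c1 * (T1 y * T1 y * e eta y)) + c1 * (c2 * (T1 y * T2 y * e eta y))
        + c2 * (c1 * (T2 y * T1 y * e eta y)) + c2 * (c2 * (T2 y * T2 y * e eta y))
        - (2 * m) * (c1 * (T1 y * e eta y) + c2 * (T2 y * e eta y)) + m^2 * (1 * e eta y))
     (c1 * (c1 * Q11) + c1 * (c2 * Q12) + c2 * (c1 * Q21) + c2 * (c2 * Q22)
        - (2 * m) * (c1 * M1 + c2 * M2) + m^2 * Zv)"
    by (intro has_bochner_integral_add has_bochner_integral_diff has_bochner_integral_mult_right
        h11 h12 h21 h22 h1 h2 h0)
  have V0: "(c1 * (c1 * Q11) + c1 * (c2 * Q12) + c2 * (c1 * Q21) + c2 * (c2 * Q22)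
        - (2 * m) * (c1 * M1 + c2 * M2) + m^2 * Zv) = 0"
  proof -
    have "c1 * (c1 * Q11) + c1 * (c2 * Q12) + c2 * (c1 * Q21) + c2 * (c2 * Q22)
        = c1 * (c1 * Q11 + c2 * Q12) + c2 * (c1 * Q21 + c2 * Q22)" by (simp add: algebra_simps)
    also have "\<dots> = m * DZ" unfolding eq1 eq2 DZ_def by (simp add: algebra_simps)
    finally have A: "c1 * (c1 * Q11) + c1 * (c2 * Q12) + c2 * (c1 * Q21) + c2 * (c2 * Q22) = m * DZ" .
    have B2: "(2 * m) * (c1 * M1 + c2 * M2) = 2 * (m * DZ)" by (simp add: DZ_def)
    have B3: "m^2 * Zv = m * DZ" using mZ by (simp add: power2_eq_square mult.assoc)
    show ?thesis using A B2 B3 by linarith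
  qed
  have "has_bochner_integral mu (\<lambda>y. c1 * (c1 * (T1 y * T1 y * e eta y)) + c1 * (c2 * (T1 y * T2 y * e eta y))
        + c2 * (c1 * (T2 y * T1 y * e eta y)) + c2 * (c2 * (T2 y * T2 y * e eta y))
        - (2 * m) * (c1 * (T1 y * e eta y) + c2 * (T2 y * e eta y)) + m^2 * (1 * e eta y)) (c1 * (c1 * Q11) + c1 * (c2 * Q12) + c2 * (c1 * Q21) + c2 * (c2 * Q22)
        - (2 * m) * (c1 * M1 + c2 * M2) + m^2 * Zv) = has_bochner_integral mu (\<lambda>y. (f y - m)^2 * e eta y) 0"
    by (rule has_bochner_integral_cong[OF refl _ V0]) (simp add: f_def power2_eq_square algebra_simps)
  with HB have hz: "has_bochner_integral mu (\<lambda>y. (f y - m)^2 * e eta y) 0" by blast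
  have ihz: "integrable mu (\<lambda>y. (f y - m)^2 * e eta y)" using hz integrable.intros by blast
  have "AE y in mu. (f y - m)^2 * e eta y = 0"
    using integral_nonneg_eq_0_iff_AE[OF ihz] has_bochner_integral_integral_eq[OF hz]
    by (simp add: e_nonneg)
  then have AEf: "AE y in mu. e eta y * exp (t * f y) = e eta y * exp (t * m)" for t
  proof eventually_elim
    fix y assume "(f y - m)^2 * e eta y = 0"
    then have "f y = m \<or> e eta y = 0" by simp
    then show "e eta y * exp (t * f y) = e eta y * exp (t * m)" by auto
  qed
  show ?thesis
  proof (rule ccontr)
    assume "c \<noteq> 0"
    then have nc: "norm c > 0" by simp
    obtain r where r: "r > 0" "ball eta r \<subseteq> EDom"
      using dom_open eta open_contains_ball by blast
    define t where "t = r / (2 * norm c)"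
    have t: "t > 0" using r nc by (simp add: t_def)
    define eta1 where "eta1 = eta + t *\<^sub>R c"
    have "dist eta eta1 = t * norm c" using t by (simp add: eta1_def dist_norm)
    also have "\<dots> = r / 2" using nc by (simp add: t_def)
    finally have eta1: "eta1 \<in> EDom" using r by auto
    have e1: "e eta1 y = e eta y * exp (t * f y)" for y
      unfolding eta1_def e_shift by (simp add: c f_def algebra_simps)
    have Fg: "F g eta1 = exp (t * m) * F g eta" if g[measurable]: "g \<in> borel_measurable mu" for g
    proof -
      have "F g eta1 = (\<integral>y. g y * (e eta y * exp (t * f y)) \<partial>mu)" unfolding F_def e1 ..
      also have "\<dots> = (\<integral>y. g y * (e eta y * exp (t * m)) \<partial>mu)"
        by (rule integral_cong_AE) (use AEf[of t] in \<open>auto simp: f_def\<close>)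
      also have "\<dots> = (\<integral>y. exp (t * m) * (g y * e eta y) \<partial>mu)"
        by (rule Bochner_Integration.integral_cong) (simp_all add: ac_simps)
      also have "\<dots> = exp (t * m) * F g eta" by (simp add: F_def)
      finally show ?thesis .
    qed
    have "ef_mean mu h T1 T2 eta1 = ef_mean mu h T1 T2 eta"
      unfolding mean_eq[OF eta1] mean_eq[OF eta] Z_def
      by (simp add: Fg)
    then have "eta1 = eta" using inj eta1 eta by (metis inj_onD)
    then have "t *\<^sub>R c = 0" by (simp add: eta1_def)
    then show False using t \<open>c \<noteq> 0\<close> by simp
  qed
qed

end


lemma sum_if_eq:
  fixes a :: real and b :: "nat \<Rightarrow> real"
  assumes "d < D"
  shows "(\<Sum>d'<D. if d' = d \<and> Q then a else b d') = (if Q then a else 0) + (\<Sum>d'<D. if d' = d \<and> Q then 0 else b d')"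
proof -
  have "(\<Sum>d'<D. if d' = d \<and> Q then a else b d') = (\<Sum>d'<D. (if d' = d \<and> Q then a else 0) + (if d' = d \<and> Q then 0 else b d'))"
    by (rule sum.cong) auto
  also have "\<dots> = (\<Sum>d'<D. if d' = d \<and> Q then a else 0) + (\<Sum>d'<D. if d' = d \<and> Q then 0 else b d')"
    by (rule sum.distrib)
  also have "(\<Sum>d'<D. if d' = d \<and> Q then a else 0) = (if Q then a else 0)"
    using assms by (cases Q) (simp_all add: sum.delta)
  finally show ?thesis .
qed

theorem corollary1:
  fixes mu :: "real measure" and h T1 T2 :: "real \<Rightarrow> real"
    and Phi :: "real \<times> real \<Rightarrow> real \<times> real"
    and D H N :: nat and y :: "nat \<Rightarrow> nat \<Rightarrow> real" and q :: "nat \<Rightarrow> nat set \<Rightarrow> real"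
    and W V :: "nat \<Rightarrow> nat \<Rightarrow> real" and pri :: "nat \<Rightarrow> real" and d k :: nat
  assumes h_meas: "h \<in> borel_measurable borel" and h_nonneg: "\<And>y. h y \<ge> 0"
    and T1_meas: "T1 \<in> borel_measurable borel" and T2_meas: "T2 \<in> borel_measurable borel"
    and space_mu: "sets mu = sets borel"
    and T1_id: "\<And>y. T1 y = y"
    and dom_open: "open (ef_dom mu h T1 T2)"
    and mean_inj: "inj_on (ef_mean mu h T1 T2) (ef_dom mu h T1 T2)"
    and Phi_inv: "\<And>eta. eta \<in> ef_dom mu h T1 T2 \<Longrightarrow> Phi (ef_mean mu h T1 T2 eta) = eta"
    and Theta_ok: "\<And>d' k'. d' < D \<Longrightarrow> k' < H \<Longrightarrow>
                     (W d' k', V d' k') \<in> ef_mean mu h T1 T2 ` ef_dom mu h T1 T2"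
    and q_nonneg: "\<And>n s. n < N \<Longrightarrow> s \<in> Pow {..<H} \<Longrightarrow> q n s \<ge> 0"
    and q_sum: "\<And>n. n < N \<Longrightarrow> (\<Sum>s\<in>Pow {..<H}. q n s) = 1"
    and data_supp: "\<And>n d'. n < N \<Longrightarrow> d' < D \<Longrightarrow> h (y n d') > 0"
    and d_lt: "d < D" and k_lt: "k < H"
    and denom_pos: "(\<Sum>n<N. mca_expA mu h T1 T2 Phi H q W V n d k) > 0"
  shows "((\<lambda>p. mca_lower_bound_frozen mu h T1 T2 Phi D H N y q W V
               (W(d := (W d)(k := fst p))) (V(d := (V d)(k := snd p))) pri)
            has_derivative (\<lambda>_. 0)) (at (W d k, V d k))
         \<longleftrightarrow>
         W d k = (\<Sum>n<N. mca_expA mu h T1 T2 Phi H q W V n d k * y n d)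
                 / (\<Sum>n<N. mca_expA mu h T1 T2 Phi H q W V n d k)
         \<and> V d k = (\<Sum>n<N. mca_expA mu h T1 T2 Phi H q W V n d k * T2 (y n d))
                 / (\<Sum>n<N. mca_expA mu h T1 T2 Phi H q W V n d k)"
proof -
  interpret efs mu h T1 T2
    by unfold_locales (fact h_meas h_nonneg T1_meas T2_meas space_mu dom_open)+
  obtain eta0 where eta0: "eta0 \<in> EDom" and x0: "(W d k, V d k) = ef_mean mu h T1 T2 eta0"
    using Theta_ok[OF d_lt k_lt] by blast
  have Phi0: "Phi (W d k, V d k) = eta0" using x0 Phi_inv[OF eta0] by simp
  have mx: "W d k = F T1 eta0 / Z eta0" and my: "V d k = F T2 eta0 / Z eta0"
    using x0 mean_eq[OF eta0] by simp_all
  have dm: "(ef_mean mu h T1 T2 has_derivative Dm eta0) (at eta0)" by (rule mean_deriv[OF eta0])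
  have linDm: "linear (Dm eta0)" using dm has_derivative_bounded_linear bounded_linear.linear by blast
  have injDm: "inj (Dm eta0)"
    unfolding linear_injective_0[OF linDm] using Dm_zero[OF mean_inj eta0] by blast
  obtain g' where g'lin: "linear g'" and gD: "\<And>x. g' (Dm eta0 x) = x" and Dg: "\<And>x. Dm eta0 (g' x) = x"
    using linear_injective_isomorphism[OF linDm injDm] by metis
  have Phid: "(Phi has_derivative g') (at (W d k, V d k))"
    unfolding x0
  proof (rule has_derivative_inverse_strong[OF dom_open eta0 mean_cont _ dm])
    show "\<And>x. x \<in> EDom \<Longrightarrow> Phi (ef_mean mu h T1 T2 x) = x" by (rule Phi_inv)
    show "Dm eta0 \<circ> g' = id" by (rule ext) (simp add: Dg)
  qed

  define E where "E = (\<lambda>n. mca_expA mu h T1 T2 Phi H q W V n d k)"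
  define j where "j = mca_hsel mu h T1 T2 Phi H W V"
  define lp where "lp n eta = ln (h (y n d)) + fst eta * y n d + snd eta * T2 (y n d) - ln (Z eta)" for n eta
  define Rs where "Rs n s = (\<Sum>d'<D. if d' = d \<and> j d s = k then 0
        else ln (ef_p mu h T1 T2 (Phi (W d' (j d' s), V d' (j d' s))) (y n d'))) + mca_log_prior H pri s" for n s
  define C0 where "C0 = (\<Sum>n<N. \<Sum>s\<in>Pow {..<H}. q n s * Rs n s) + mca_entropy N H q"
  define K where "K = (\<lambda>eta. C0 + (\<Sum>n<N. E n * lp n eta))"
  have lnp: "ln (ef_p mu h T1 T2 eta (y n d)) = lp n eta" if n: "n < N" for n eta
  proof -
    have hp: "h (y n d) > 0" using data_supp[OF n d_lt] .
    define X where "X = fst eta * T1 (y n d) + snd eta * T2 (y n d) - ef_A mu h T1 T2 eta"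
    have e1: "ef_p mu h T1 T2 eta (y n d) = h (y n d) * exp X" unfolding ef_p_def X_def ..
    have e2: "ln (h (y n d) * exp X) = ln (h (y n d)) + X"
      using hp by (simp add: ln_mult)
    have e3: "ef_A mu h T1 T2 eta = ln (Z eta)" unfolding ef_A_def Z_eq ..
    have "ln (ef_p mu h T1 T2 eta (y n d)) = ln (h (y n d)) + X" unfolding e1 e2 ..
    also have "\<dots> = lp n eta" unfolding X_def e3 lp_def T1_id[of "y n d"] by simp
    finally show ?thesis .
  qed
  have LBeq: "mca_lower_bound_frozen mu h T1 T2 Phi D H N y q W V
               (W(d := (W d)(k := fst p))) (V(d := (V d)(k := snd p))) pri = K (Phi p)" for p
  proof -
    have inner: "(\<Sum>d'<D. ln (ef_p mu h T1 T2 (Phi ((W(d := (W d)(k := fst p))) d' (j d' s),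
                     (V(d := (V d)(k := snd p))) d' (j d' s))) (y n d')))
       = (if j d s = k then ln (ef_p mu h T1 T2 (Phi p) (y n d)) else 0)
         + (\<Sum>d'<D. if d' = d \<and> j d s = k then 0
             else ln (ef_p mu h T1 T2 (Phi (W d' (j d' s), V d' (j d' s))) (y n d')))" for n s
    proof -
      have "(\<Sum>d'<D. ln (ef_p mu h T1 T2 (Phi ((W(d := (W d)(k := fst p))) d' (j d' s),
                     (V(d := (V d)(k := snd p))) d' (j d' s))) (y n d')))
          = (\<Sum>d'<D. if d' = d \<and> j d s = k then ln (ef_p mu h T1 T2 (Phi p) (y n d))
             else ln (ef_p mu h T1 T2 (Phi (W d' (j d' s), V d' (j d' s))) (y n d')))"
      proof (rule sum.cong[OF refl])
        fix d' assume "d' \<in> {..<D}"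
        show "ln (ef_p mu h T1 T2 (Phi ((W(d := (W d)(k := fst p))) d' (j d' s),
                     (V(d := (V d)(k := snd p))) d' (j d' s))) (y n d'))
          = (if d' = d \<and> j d s = k then ln (ef_p mu h T1 T2 (Phi p) (y n d))
             else ln (ef_p mu h T1 T2 (Phi (W d' (j d' s), V d' (j d' s))) (y n d')))"
          by (cases "d' = d"; cases "j d s = k") simp_all
      qed
      then show ?thesis using sum_if_eq[OF d_lt] by (rule trans)
    qed
    have qE: "(\<Sum>s\<in>Pow {..<H}. q n s * (if j d s = k then a else 0)) = E n * a" for n a
      unfolding E_def mca_expA_def mca_Aind_def j_def
      unfolding sum_distrib_right by (rule sum.cong) auto
    have "mca_lower_bound_frozen mu h T1 T2 Phi D H N y q W V
               (W(d := (W d)(k := fst p))) (V(d := (V d)(k := snd p))) pri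
        = (\<Sum>n<N. \<Sum>s\<in>Pow {..<H}. q n s * ((if j d s = k then ln (ef_p mu h T1 T2 (Phi p) (y n d)) else 0) + Rs n s)) + mca_entropy N H q"
      unfolding mca_lower_bound_frozen_def j_def[symmetric] inner Rs_def by (simp add: add.assoc)
    also have "\<dots> = (\<Sum>n<N. E n * ln (ef_p mu h T1 T2 (Phi p) (y n d))) + C0"
      unfolding C0_def by (simp add: distrib_left sum.distrib qE add.assoc)
    also have "\<dots> = K (Phi p)"
      unfolding K_def by (simp add: lnp)
    finally show ?thesis .
  qed
  have LBfun: "(\<lambda>p. mca_lower_bound_frozen mu h T1 T2 Phi D H N y q W V
               (W(d := (W d)(k := fst p))) (V(d := (V d)(k := snd p))) pri) = K \<circ> Phi"
    using LBeq by (simp add: fun_eq_iff)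
  have lnZ: "((\<lambda>eta. ln (Z eta)) has_derivative (\<lambda>u. (fst u * F T1 eta0 + snd u * F T2 eta0) * inverse (Z eta0))) (at eta0)"
    by (rule has_derivative_ln[OF Z_pos[OF eta0] Z_deriv[OF eta0]])
  define DK where "DK = (\<lambda>u::real\<times>real. 0 + (\<Sum>n<N. E n * (0 + fst u * y n d + snd u * T2 (y n d)
       - (fst u * F T1 eta0 + snd u * F T2 eta0) * inverse (Z eta0))))"
  have dlp: "((\<lambda>eta. lp n eta) has_derivative (\<lambda>u. 0 + fst u * y n d + snd u * T2 (y n d)
       - (fst u * F T1 eta0 + snd u * F T2 eta0) * inverse (Z eta0))) (at eta0)" for n
    unfolding lp_def
    by (intro has_derivative_diff has_derivative_add has_derivative_const has_derivative_mult_left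
        has_derivative_fst has_derivative_snd has_derivative_ident lnZ)
  have dK: "(K has_derivative DK) (at eta0)"
    unfolding K_def DK_def
    by (intro has_derivative_add has_derivative_const has_derivative_sum has_derivative_mult_right dlp)
  define S1 where "S1 = (\<Sum>n<N. E n * y n d)"
  define S2 where "S2 = (\<Sum>n<N. E n * T2 (y n d))"
  define a where "a = (\<Sum>n<N. E n)"
  have apos: "a > 0" using denom_pos by (simp add: a_def E_def)
  have DKv: "DK u = fst u * (S1 - a * W d k) + snd u * (S2 - a * V d k)" for u
  proof -
    have iz: "(fst u * F T1 eta0 + snd u * F T2 eta0) * inverse (Z eta0) = fst u * W d k + snd u * V d k"
      unfolding mx my by (simp only: divide_inverse distrib_right mult.assoc)
    have "DK u = (\<Sum>n<N. fst u * (E n * y n d) + snd u * (E n * T2 (y n d)) - (fst u * W d k + snd u * V d k) * E n)"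
      unfolding DK_def iz by (simp add: algebra_simps)
    also have "\<dots> = fst u * S1 + snd u * S2 - (fst u * W d k + snd u * V d k) * a"
      unfolding S1_def S2_def a_def
      by (simp add: sum_subtractf sum.distrib sum_distrib_left sum_distrib_right)
    finally show ?thesis by (simp add: algebra_simps)
  qed
  have chain: "((K \<circ> Phi) has_derivative (DK \<circ> g')) (at (W d k, V d k))"
    using diff_chain_at[OF Phid] dK Phi0 by simp
  have "((K \<circ> Phi) has_derivative (\<lambda>_. 0)) (at (W d k, V d k)) \<longleftrightarrow> DK \<circ> g' = (\<lambda>_. 0)"
  proof
    assume L: "((K \<circ> Phi) has_derivative (\<lambda>_. 0)) (at (W d k, V d k))"
    show "DK \<circ> g' = (\<lambda>_. 0)" by (rule has_derivative_unique[OF chain L])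
  next
    assume "DK \<circ> g' = (\<lambda>_. 0)"
    then show "((K \<circ> Phi) has_derivative (\<lambda>_. 0)) (at (W d k, V d k))" using chain by simp
  qed
  also have "\<dots> \<longleftrightarrow> (\<forall>u. DK u = 0)"
  proof
    assume z: "DK \<circ> g' = (\<lambda>_. 0)"
    show "\<forall>u. DK u = 0"
    proof
      fix u
      have "DK u = (DK \<circ> g') (Dm eta0 u)" by (simp add: gD)
      then show "DK u = 0" using z by simp
    qed
  next
    assume z: "\<forall>u. DK u = 0"
    show "DK \<circ> g' = (\<lambda>_. 0)"
    proof (rule ext)
      fix x show "(DK \<circ> g') x = 0" by (simp add: z[rule_format])
    qed
  qed
  also have "\<dots> \<longleftrightarrow> S1 - a * W d k = 0 \<and> S2 - a * V d k = 0"
  proof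
    assume "\<forall>u. DK u = 0"
    then have "DK (1, 0) = 0" "DK (0, 1) = 0" by auto
    then show "S1 - a * W d k = 0 \<and> S2 - a * V d k = 0" by (simp add: DKv)
  qed (simp add: DKv)
  also have "\<dots> \<longleftrightarrow> W d k = S1 / a \<and> V d k = S2 / a"
    using apos by (auto simp: field_simps)
  finally show ?thesis
    unfolding LBfun S1_def S2_def a_def E_def .
qed


end
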